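(* Let $A$ be a linear matrix of the form $\begin{bmatrix} C_n\\ F\end{bmatrix}$. If $g=g(A)<n$, then there exists a matrix $F'$ consisting of $h\ge1$ rows of $F$ such that $\begin{bmatrix} C_n\\ F'\end{bmatrix}$ contains a submatrix congruent to $C_g$ as an up-matrix.
   Context: A $\{0,1\}$-matrix is linear if it has no $2\times2$ submatrix with all entries $1$. Matrices are congruent if one is obtained from the other by permuting rows and columns. $C_n$ is the $n\times n$ matrix with $c_{i,j}=1$ iff $j\in\{i,i+1\}$ (indices mod $n$). For a $\{0,1\}$-matrix $A$, $g(A)=\infty$ if $A$ contains no submatrix congruent to $C_k$ for odd $k$, and otherwise $g(A)$ is the least odd $k$ such that $A$ has a submatrix congruent to $C_k$. The up-matrix $M^\uparrow$ of $M$ is the row submatrix consisting of the rows $r$ for which no other row $r'\neq r$ satisfies $r\le r'$ componentwise. A matrix $M$ contains $N$ as an up-matrix if for some set $S$ of columns, the up-matrix of the column submatrix of $M$ on $S$ equals $N$. *)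

theory Defs
  imports Main "HOL-Library.Extended_Nat"
begin

text \<open>A {0,1}-matrix is represented by an entry function M :: nat => nat => bool
  (True = entry 1), together with an explicit set of row indices and
  the column set {..<n}.\<close>

definition Cmat :: "nat \<Rightarrow> nat \<Rightarrow> nat \<Rightarrow> bool" where
  "Cmat k i j \<longleftrightarrow> (j = i \<or> j = Suc i mod k)"

definition linear_mat :: "(nat \<Rightarrow> nat \<Rightarrow> bool) \<Rightarrow> nat set \<Rightarrow> nat \<Rightarrow> bool" where
  "linear_mat M R n \<longleftrightarrow>
     \<not> (\<exists>i1\<in>R. \<exists>i2\<in>R. \<exists>j1<n. \<exists>j2<n. i1 \<noteq> i2 \<and> j1 \<noteq> j2 \<and>
          M i1 j1 \<and> M i1 j2 \<and> M i2 j1 \<and> M i2 j2)"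

definition has_C_sub :: "(nat \<Rightarrow> nat \<Rightarrow> bool) \<Rightarrow> nat set \<Rightarrow> nat \<Rightarrow> nat \<Rightarrow> bool" where
  "has_C_sub M R n k \<longleftrightarrow>
     (\<exists>f g. inj_on f {..<k} \<and> f ` {..<k} \<subseteq> R \<and>
            inj_on g {..<k} \<and> g ` {..<k} \<subseteq> {..<n} \<and>
            (\<forall>i<k. \<forall>j<k. M (f i) (g j) = Cmat k i j))"

definition odd_girth :: "(nat \<Rightarrow> nat \<Rightarrow> bool) \<Rightarrow> nat set \<Rightarrow> nat \<Rightarrow> enat" where
  "odd_girth M R n =
     (if \<exists>k. odd k \<and> 3 \<le> k \<and> has_C_sub M R n k
      then enat (LEAST k. odd k \<and> 3 \<le> k \<and> has_C_sub M R n k) else \<infinity>)"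

definition row_on :: "(nat \<Rightarrow> nat \<Rightarrow> bool) \<Rightarrow> nat set \<Rightarrow> nat \<Rightarrow> nat \<Rightarrow> bool" where
  "row_on M S r = (\<lambda>j. j \<in> S \<and> M r j)"

text \<open>The rows of the up-matrix of the column submatrix of M on S, as a set of row vectors:
  those rows r such that no row r' with a different vector dominates r componentwise.\<close>
definition up_rows :: "(nat \<Rightarrow> nat \<Rightarrow> bool) \<Rightarrow> nat set \<Rightarrow> nat set \<Rightarrow> (nat \<Rightarrow> bool) set" where
  "up_rows M R S =
     {row_on M S r | r. r \<in> R \<and>
        \<not> (\<exists>r'\<in>R. row_on M S r' \<noteq> row_on M S r \<and> row_on M S r \<le> row_on M S r')}"

definition contains_C_up :: "(nat \<Rightarrow> nat \<Rightarrow> bool) \<Rightarrow> nat set \<Rightarrow> nat \<Rightarrow> nat \<Rightarrow> bool" where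
  "contains_C_up M R n k \<longleftrightarrow>
     (\<exists>S \<subseteq> {..<n}. \<exists>f g. bij_betw f {..<k} (up_rows M R S) \<and> bij_betw g {..<k} S \<and>
            (\<forall>i<k. \<forall>j<k. f i (g j) = Cmat k i j))"

definition stack :: "nat \<Rightarrow> (nat \<Rightarrow> nat \<Rightarrow> bool) \<Rightarrow> nat \<Rightarrow> nat \<Rightarrow> bool" where
  "stack n F i j = (if i < n then Cmat n i j else F (i - n) j)"

end

theory Submission imports Defs "HOL-Number_Theory.Cong" begin

definition iscyc :: "(nat \<Rightarrow> nat \<Rightarrow> bool) \<Rightarrow> nat set \<Rightarrow> nat \<Rightarrow> nat \<Rightarrow> (nat\<Rightarrow>nat) \<Rightarrow> (nat\<Rightarrow>nat) \<Rightarrow> bool" where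
  "iscyc M R n k f gg \<longleftrightarrow> inj_on f {..<k} \<and> f ` {..<k} \<subseteq> R \<and>
            inj_on gg {..<k} \<and> gg ` {..<k} \<subseteq> {..<n} \<and>
            (\<forall>i<k. \<forall>j<k. M (f i) (gg j) = Cmat k i j)"

lemma has_C_sub_iff: "has_C_sub M R n k \<longleftrightarrow> (\<exists>f gg. iscyc M R n k f gg)"
  by (simp add: has_C_sub_def iscyc_def)

lemma rot_inj: "0 < (k::nat) \<Longrightarrow> inj_on (\<lambda>i. (i + c) mod k) {..<k}"
proof (rule inj_onI)
  fix x y :: nat assume "0 < k" "x \<in> {..<k}" "y \<in> {..<k}" "(x + c) mod k = (y + c) mod k"
  then have "[x = y] (mod k)"
    by (metis cong_add_rcancel_nat cong_def)
  then show "x = y" using \<open>x \<in> {..<k}\<close> \<open>y \<in> {..<k}\<close> by (simp add: cong_def)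
qed

lemma Cmat_rot:
  fixes k :: nat
  assumes "i < k" "j < k"
  shows "Cmat k ((i + c) mod k) ((j + c) mod k) = Cmat k i j"
proof -
  have k: "0 < k" using assms by simp
  have e1: "((j + c) mod k = (i + c) mod k) = (j = i)"
    using rot_inj[OF k, of c] assms by (auto dest: inj_onD)
  have "Suc ((i + c) mod k) mod k = ((Suc i mod k) + c) mod k"
    by (simp add: mod_Suc_eq mod_add_left_eq)
  moreover have "((j + c) mod k = ((Suc i mod k) + c) mod k) = (j = Suc i mod k)"
    using rot_inj[OF k, of c] assms k by (auto dest: inj_onD)
  ultimately show ?thesis using e1 by (simp add: Cmat_def)
qed

lemma iscyc_rot:
  assumes "iscyc M R n k f gg" "0 < k"
  shows "iscyc M R n k (\<lambda>i. f ((i + c) mod k)) (\<lambda>i. gg ((i + c) mod k))"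
proof -
  have im: "(\<lambda>i. (i + c) mod k) ` {..<k} \<subseteq> {..<k}" using assms(2) by auto
  have inj: "inj_on (\<lambda>i. (i + c) mod k) {..<k}" using rot_inj[OF assms(2)] .
  show ?thesis using assms(1) unfolding iscyc_def
    apply (intro conjI)
    subgoal using comp_inj_on[OF inj, of f] inj_on_subset im by (auto simp: o_def intro: comp_inj_on inj_on_subset)
    subgoal using im by auto
    subgoal using comp_inj_on[OF inj, of gg] inj_on_subset im by (auto simp: o_def intro: comp_inj_on inj_on_subset)
    subgoal using im by auto
    subgoal using Cmat_rot assms(2) by auto
    done
qed


lemma iscyc_arc:
  assumes c: "iscyc M R n k f gg" and r: "r \<in> R" "r \<notin> f ` {..<k}"
    and pq: "p < q" "q < k" and Mp: "M r (gg p)" and Mq: "M r (gg q)"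
    and only: "\<forall>j<k. M r (gg j) \<longrightarrow> j = p \<or> j = q"
  shows "iscyc M R n (q - p + 1) (\<lambda>i. if i < q - p then f (p + i) else r) (\<lambda>i. gg (p + i))"
proof -
  let ?d = "q - p"
  have injf: "inj_on f {..<k}" and fR: "f ` {..<k} \<subseteq> R" and injg: "inj_on gg {..<k}"
    and gn: "gg ` {..<k} \<subseteq> {..<n}" and ent: "\<forall>i<k. \<forall>j<k. M (f i) (gg j) = Cmat k i j"
    using c by (auto simp: iscyc_def)
  show ?thesis unfolding iscyc_def
  proof (intro conjI)
    show "inj_on (\<lambda>i. if i < ?d then f (p + i) else r) {..<?d + 1}"
    proof (rule inj_onI)
      fix x y assume x: "x \<in> {..<?d+1}" and y: "y \<in> {..<?d+1}"
        and e: "(if x < ?d then f (p + x) else r) = (if y < ?d then f (p + y) else r)"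
      show "x = y"
      proof (cases "x < ?d")
        case True
        show ?thesis
        proof (cases "y < ?d")
          case True
          with \<open>x < ?d\<close> e have "f (p+x) = f (p+y)" by simp
          then have "p + x = p + y" using injf \<open>x < ?d\<close> True pq by (auto dest: inj_onD)
          then show ?thesis by simp
        next
          case False
          with \<open>x < ?d\<close> e have "r = f (p+x)" by simp
          then show ?thesis using r \<open>x < ?d\<close> pq by auto
        qed
      next
        case False
        show ?thesis
        proof (cases "y < ?d")
          case True
          with False e have "r = f (p+y)" by simp
          then show ?thesis using r True pq by auto
        next
          case False
          then show ?thesis using \<open>\<not> x < ?d\<close> x y by simp
        qed
      qed
    qed
    show "(\<lambda>i. if i < ?d then f (p + i) else r) ` {..<?d + 1} \<subseteq> R"
      using fR r pq by auto
    show "inj_on (\<lambda>i. gg (p + i)) {..<?d + 1}"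
    proof (rule inj_onI)
      fix x y assume "x \<in> {..<?d+1}" "y \<in> {..<?d+1}" "gg (p + x) = gg (p + y)"
      then have "p + x = p + y" using injg pq by (auto dest: inj_onD)
      then show "x = y" by simp
    qed
    show "(\<lambda>i. gg (p + i)) ` {..<?d + 1} \<subseteq> {..<n}"
    proof
      fix x assume "x \<in> (\<lambda>i. gg (p + i)) ` {..<?d + 1}"
      then obtain i where "i < ?d + 1" "x = gg (p+i)" by auto
      then have "p + i < k" using pq by simp
      then show "x \<in> {..<n}" using gn \<open>x = gg (p+i)\<close> by auto
    qed
    show "\<forall>i<?d + 1. \<forall>j<?d + 1. M (if i < ?d then f (p + i) else r) (gg (p + j)) = Cmat (?d + 1) i j"
    proof (intro allI impI)
      fix i j assume i: "i < ?d + 1" and j: "j < ?d + 1"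
      show "M (if i < ?d then f (p + i) else r) (gg (p + j)) = Cmat (?d + 1) i j"
      proof (cases "i < ?d")
        case True
        have "M (f (p+i)) (gg (p+j)) = Cmat k (p+i) (p+j)" using ent True j pq by auto
        also have "\<dots> = (j = i \<or> j = Suc i)" using True pq by (auto simp: Cmat_def)
        also have "\<dots> = Cmat (?d + 1) i j" using True by (auto simp: Cmat_def)
        finally show ?thesis using True by simp
      next
        case False
        then have ii: "i = ?d" using i by simp
        have "M r (gg (p+j)) = (j = 0 \<or> j = ?d)"
        proof
          assume "M r (gg (p+j))"
          moreover have "p + j < k" using j pq by simp
          ultimately have "p + j = p \<or> p + j = q" using only by blast
          then show "j = 0 \<or> j = ?d" by auto
        next
          assume "j = 0 \<or> j = ?d"
          then show "M r (gg (p+j))" using Mp Mq pq by auto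
        qed
        also have "\<dots> = Cmat (?d + 1) i j" using ii by (auto simp: Cmat_def)
        finally show ?thesis using False by simp
      qed
    qed
  qed
qed


lemma chord_lt:
  assumes c: "iscyc M R n k f gg" and k: "3 \<le> k" "odd k"
    and r: "r \<in> R" "r \<notin> f ` {..<k}"
    and pq: "p < q" "q < k" and Mp: "M r (gg p)" and Mq: "M r (gg q)"
    and only: "\<forall>j<k. M r (gg j) \<longrightarrow> j = p \<or> j = q"
    and na1: "q \<noteq> Suc p mod k" and na2: "p \<noteq> Suc q mod k"
  shows "\<exists>k'. odd k' \<and> 3 \<le> k' \<and> k' < k \<and> has_C_sub M R n k'"
proof -
  have d1: "q - p \<ge> 2" using pq na1 by (cases "q = Suc p") auto
  have d2: "k - q + p \<ge> 2"
  proof (rule ccontr)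
    assume "\<not> ?thesis"
    then have "q = k - 1" "p = 0" using pq by auto
    then have "Suc q mod k = p" using k by simp
    then show False using na2 by simp
  qed
  show ?thesis
  proof (cases "even (q - p)")
    case True
    have "iscyc M R n (q - p + 1) (\<lambda>i. if i < q - p then f (p + i) else r) (\<lambda>i. gg (p + i))"
      by (rule iscyc_arc[OF c r pq Mp Mq only])
    then have "has_C_sub M R n (q - p + 1)" by (auto simp: has_C_sub_iff)
    moreover have "odd (q - p + 1)" "3 \<le> q - p + 1" "q - p + 1 < k" using True d1 d2 pq by auto
    ultimately show ?thesis by blast
  next
    case False
    let ?q' = "p + k - q"
    have sm: "?q' + (q - p) = k" using pq by simp
    have ev: "even ?q'"
    proof -
      have "odd (?q' + (q - p))" using sm k by simp
      then show ?thesis using False by simp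
    qed
    have k0: "0 < k" using k by simp
    have c2: "iscyc M R n k (\<lambda>i. f ((i + q) mod k)) (\<lambda>i. gg ((i + q) mod k))"
      by (rule iscyc_rot[OF c k0])
    have r2: "r \<notin> (\<lambda>i. f ((i + q) mod k)) ` {..<k}"
      using r(2) k0 by auto
    have pq2: "0 < ?q'" "?q' < k" using pq d1 by auto
    have M0: "M r (gg ((0 + q) mod k))" using Mq pq by simp
    have eq': "(?q' + q) mod k = p" using pq by simp
    have Mq': "M r (gg ((?q' + q) mod k))" using Mp eq' by simp
    have only2: "\<forall>j<k. M r (gg ((j + q) mod k)) \<longrightarrow> j = 0 \<or> j = ?q'"
    proof (intro allI impI)
      fix j assume j: "j < k" and "M r (gg ((j + q) mod k))"
      then have "(j + q) mod k = p \<or> (j + q) mod k = q" using only k0 by auto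
      then have "(j + q) mod k = (?q' + q) mod k \<or> (j + q) mod k = (0 + q) mod k"
        using eq' pq by auto
      moreover have "0 < k" "0 \<in> {..<k}" "?q' \<in> {..<k}" "j \<in> {..<k}" using j pq2 by auto
      ultimately show "j = 0 \<or> j = ?q'"
        using inj_onD[OF rot_inj[OF k0, of q]] by metis
    qed
    have "iscyc M R n (?q' - 0 + 1) (\<lambda>i. if i < ?q' - 0 then f ((0 + i + q) mod k) else r)
            (\<lambda>i. gg ((0 + i + q) mod k))"
      using iscyc_arc[OF c2 r(1) r2 pq2 M0 Mq' only2] by simp
    then have "has_C_sub M R n (?q' + 1)" by (auto simp: has_C_sub_iff)
    moreover have "odd (?q' + 1)" "3 \<le> ?q' + 1" "?q' + 1 < k" using ev d1 d2 pq by auto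
    ultimately show ?thesis by blast
  qed
qed


lemma two_step_False:
  fixes i i' g :: nat
  assumes "i < g" "i' < g" "3 \<le> g" "i = Suc i' mod g" "i' = Suc i mod g"
  shows False
proof (cases "Suc i' < g")
  case True
  then have ii: "i = Suc i'" using assms(4) by simp
  show False
  proof (cases "Suc i < g")
    case True
    then have "i' = Suc i" using assms(5) by simp
    then show False using ii by simp
  next
    case False
    then have "Suc i = g" using assms(1) by simp
    then have "i' = 0" using assms(5) by simp
    then show False using ii \<open>Suc i = g\<close> assms(3) by simp
  qed
next
  case False
  then have "Suc i' = g" using assms(2) by simp
  then have "i = 0" using assms(4) by simp
  then have "i' = 1" using assms(5) assms(3) by simp
  then show False using \<open>Suc i' = g\<close> assms(3) by simp
qed

lemma Suc_mod_inj:
  fixes a b n :: nat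
  assumes "a < n" "b < n" "Suc a mod n = Suc b mod n"
  shows "a = b"
proof -
  have "0 < n" using assms by simp
  have "(a + 1) mod n = (b + 1) mod n" using assms(3) by simp
  then show ?thesis by (rule inj_onD[OF rot_inj[OF \<open>0 < n\<close>]]) (use assms in auto)
qed

theorem lemma4:
  fixes n m g :: nat and F :: "nat \<Rightarrow> nat \<Rightarrow> bool"
  assumes lin: "linear_mat (stack n F) {..<n+m} n"
    and gA: "odd_girth (stack n F) {..<n+m} n = enat g"
    and glt: "g < n"
  shows "\<exists>H. H \<subseteq> {..<m} \<and> H \<noteq> {} \<and>
           contains_C_up (stack n F) ({..<n} \<union> (\<lambda>i. n + i) ` H) n g"
proof -
  define M where "M = stack n F"
  let ?P = "\<lambda>k. odd k \<and> 3 \<le> k \<and> has_C_sub M {..<n+m} n k"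
  have ex: "\<exists>k. ?P k"
  proof (rule ccontr)
    assume "\<not> ?thesis"
    then have "odd_girth M {..<n+m} n = \<infinity>" by (simp add: odd_girth_def)
    then show False using gA M_def by simp
  qed
  have gdef: "g = (LEAST k. ?P k)" using gA ex M_def by (simp add: odd_girth_def)
  have Pg: "?P g" using LeastI_ex[OF ex] gdef by simp
  have gmin: "\<And>k. ?P k \<Longrightarrow> g \<le> k" unfolding gdef by (rule Least_le)
  have g3: "3 \<le> g" and godd: "odd g" using Pg by auto
  obtain f gg where cyc: "iscyc M {..<n+m} n g f gg" using Pg by (auto simp: has_C_sub_iff)
  have injf: "inj_on f {..<g}" and fR0: "f ` {..<g} \<subseteq> {..<n+m}" and injg: "inj_on gg {..<g}"
    and gn: "gg ` {..<g} \<subseteq> {..<n}" and ent: "\<And>i j. i<g \<Longrightarrow> j<g \<Longrightarrow> M (f i) (gg j) = Cmat g i j"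
    using cyc by (auto simp: iscyc_def)
  have linM: "\<And>i1 i2 j1 j2. i1 < n+m \<Longrightarrow> i2 < n+m \<Longrightarrow> j1 < n \<Longrightarrow> j2 < n \<Longrightarrow> i1 \<noteq> i2 \<Longrightarrow> j1 \<noteq> j2
      \<Longrightarrow> M i1 j1 \<Longrightarrow> M i1 j2 \<Longrightarrow> M i2 j1 \<Longrightarrow> M i2 j2 \<Longrightarrow> False"
  proof -
    fix i1 i2 j1 j2 assume "i1 < n+m" "i2 < n+m" "j1 < n" "j2 < n" "i1 \<noteq> i2" "j1 \<noteq> j2"
      "M i1 j1" "M i1 j2" "M i2 j1" "M i2 j2"
    then have "\<exists>i1\<in>{..<n+m}. \<exists>i2\<in>{..<n+m}. \<exists>j1<n. \<exists>j2<n. i1 \<noteq> i2 \<and> j1 \<noteq> j2 \<and>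
          M i1 j1 \<and> M i1 j2 \<and> M i2 j1 \<and> M i2 j2" by blast
    then show False using lin unfolding linear_mat_def M_def by blast
  qed
  have Mlow: "\<And>r x. r < n \<Longrightarrow> M r x = (x = r \<or> x = Suc r mod n)"
    by (simp add: M_def stack_def Cmat_def)
  have gnl: "\<And>j. j < g \<Longrightarrow> gg j < n" using gn by auto
  have fnl: "\<And>j. j < g \<Longrightarrow> f j < n + m" using fR0 by auto
  have sucne: "\<And>i. i < g \<Longrightarrow> Suc i mod g \<noteq> i" using g3 by (auto simp: mod_Suc)
  have suclt: "\<And>i. Suc i mod g < g" using g3 by simp
  have ggeq: "\<And>i j. i < g \<Longrightarrow> j < g \<Longrightarrow> gg i = gg j \<longleftrightarrow> i = j" using injg by (auto dest: inj_onD)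
  have ent1: "\<And>i. i < g \<Longrightarrow> M (f i) (gg i)" using ent by (simp add: Cmat_def)
  have ent2: "\<And>i. i < g \<Longrightarrow> M (f i) (gg (Suc i mod g))" using ent suclt by (simp add: Cmat_def)

  define H where "H = {h. h < m \<and> n + h \<in> f ` {..<g}}"
  define R where "R = {..<n} \<union> (\<lambda>i. n + i) ` H"
  define S where "S = gg ` {..<g}"
  have RR: "R \<subseteq> {..<n+m}" unfolding R_def H_def by auto
  have fR: "\<And>i. i < g \<Longrightarrow> f i \<in> R"
  proof -
    fix i assume i: "i < g"
    show "f i \<in> R"
    proof (cases "f i < n")
      case True then show ?thesis by (simp add: R_def)
    next
      case False
      then have "f i - n \<in> H" using fnl[OF i] i by (auto simp: H_def)
      moreover have "f i = n + (f i - n)" using False by simp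
      ultimately show ?thesis unfolding R_def by blast
    qed
  qed
  have Rlow: "\<And>r. r \<in> R \<Longrightarrow> r \<notin> f ` {..<g} \<Longrightarrow> r < n"
    unfolding R_def H_def by auto

  have nochord: "False" if r: "r < n+m" "r \<notin> f ` {..<g}" and pq: "p < g" "q < g" "p \<noteq> q"
    and Mp: "M r (gg p)" and Mq: "M r (gg q)" and only: "\<forall>j<g. M r (gg j) \<longrightarrow> j = p \<or> j = q"
    for r p q
  proof -
    have na: "q \<noteq> Suc p mod g" if "p < g" "q < g" "p \<noteq> q" "M r (gg p)" "M r (gg q)" for p q
    proof
      assume e: "q = Suc p mod g"
      have X: "f p \<noteq> r" using r that by auto
      have Y: "gg p \<noteq> gg q" using ggeq that by auto
      show False
        by (rule linM[of "f p" r "gg p" "gg q"]) (use X Y fnl gnl that r ent1 ent2 e in auto)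
    qed
    have r': "r \<in> {..<n+m}" using r by simp
    have cyc': "iscyc M {..<n+m} n g f gg" by (rule cyc)
    show False
    proof (cases "p < q")
      case True
      from chord_lt[OF cyc' g3 godd r' r(2) True pq(2) Mp Mq only na[OF pq Mp Mq] na[OF pq(2,1) _ Mq Mp]]
      obtain k' where "?P k'" "k' < g" using pq by auto
      then show False using gmin by fastforce
    next
      case False
      then have qp: "q < p" using pq by simp
      have only': "\<forall>j<g. M r (gg j) \<longrightarrow> j = q \<or> j = p" using only by blast
      from chord_lt[OF cyc' g3 godd r' r(2) qp pq(1) Mq Mp only' na[OF pq(2,1) _ Mq Mp] na[OF pq Mp Mq]]
      obtain k' where "?P k'" "k' < g" using pq by auto
      then show False using gmin by fastforce
    qed
  qed

  have rowf: "\<And>i. i < g \<Longrightarrow> row_on M S (f i) = (\<lambda>x. x = gg i \<or> x = gg (Suc i mod g))"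
  proof -
    fix i assume i: "i < g"
    show "row_on M S (f i) = (\<lambda>x. x = gg i \<or> x = gg (Suc i mod g))"
    proof
      fix x
      show "row_on M S (f i) x = (x = gg i \<or> x = gg (Suc i mod g))"
      proof
        assume "row_on M S (f i) x"
        then obtain j where j: "j < g" "x = gg j" "M (f i) (gg j)" by (auto simp: row_on_def S_def)
        then have "Cmat g i j" using ent i by simp
        then show "x = gg i \<or> x = gg (Suc i mod g)" using j by (auto simp: Cmat_def)
      next
        assume "x = gg i \<or> x = gg (Suc i mod g)"
        then show "row_on M S (f i) x" using i suclt ent1 ent2 by (auto simp: row_on_def S_def)
      qed
    qed
  qed

  have Hne: "H \<noteq> {}"
  proof
    assume H0: "H = {}"
    have flow: "\<And>i. i < g \<Longrightarrow> f i < n"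
    proof (rule ccontr)
      fix i assume i: "i < g" and "\<not> f i < n"
      then have "f i - n \<in> H" using fnl[OF i] by (auto simp: H_def)
      then show False using H0 by simp
    qed
    have clos: "\<And>v. v \<in> S \<Longrightarrow> Suc v mod n \<in> S"
    proof -
      fix v assume "v \<in> S"
      then obtain j where j: "j < g" "v = gg j" by (auto simp: S_def)
      define j' where "j' = (j + g - 1) mod g"
      have j'l: "j' < g" using j by (simp add: j'_def)
      have sj': "Suc j' mod g = j"
      proof -
        have "Suc j' mod g = Suc (j + g - 1) mod g" by (simp add: j'_def mod_Suc_eq)
        also have "Suc (j + g - 1) = j + g" using g3 by simp
        also have "(j + g) mod g = j" using j by simp
        finally show ?thesis .
      qed
      have jj': "j \<noteq> j'" using sucne[OF j'l] sj' by simp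
      have fjj: "f j \<noteq> f j'" using injf j j'l jj' by (auto dest: inj_onD)
      have A1: "M (f j) v" using ent1 j by simp
      have A2: "M (f j') v" using ent2[OF j'l] sj' j by simp
      obtain i where i: "i < g" "f i = v"
      proof (cases "f j = v")
        case True then show ?thesis using that j by blast
      next
        case False
        show ?thesis
        proof (cases "f j' = v")
          case True then show ?thesis using that j'l by blast
        next
          case False2: False
          have "v = Suc (f j) mod n" using A1 Mlow flow j False by auto
          moreover have "v = Suc (f j') mod n" using A2 Mlow flow j'l False2 by auto
          ultimately have "f j = f j'" using Suc_mod_inj flow j j'l by metis
          then show ?thesis using fjj by simp
        qed
      qed
      have B1: "gg i = v \<or> gg i = Suc v mod n" using ent1[OF i(1)] Mlow flow[OF i(1)] i by simp
      have B2: "gg (Suc i mod g) = v \<or> gg (Suc i mod g) = Suc v mod n"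
        using ent2[OF i(1)] Mlow flow[OF i(1)] i by simp
      have B3: "gg i \<noteq> gg (Suc i mod g)" using ggeq[of i "Suc i mod g", OF i(1) suclt] sucne[OF i(1)] by auto
      have "Suc v mod n = gg i \<or> Suc v mod n = gg (Suc i mod g)" using B1 B2 B3 by auto
      then show "Suc v mod n \<in> S" using i suclt unfolding S_def by blast
    qed
    have s0: "gg 0 \<in> S" using g3 by (simp add: S_def)
    have allk: "(gg 0 + k) mod n \<in> S" for k
    proof (induction k)
      case 0
      then show ?case using s0 gnl g3 by simp
    next
      case (Suc k)
      have "(gg 0 + Suc k) mod n = Suc ((gg 0 + k) mod n) mod n" by (simp add: mod_Suc_eq)
      then show ?case using clos[OF Suc.IH] by simp
    qed
    have "{..<n} \<subseteq> S"
    proof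
      fix x assume "x \<in> {..<n}"
      then have x: "x < n" by simp
      have "gg 0 < n" using gnl g3 by simp
      then have "(gg 0 + (n - gg 0 + x)) mod n = x" using x by simp
      then show "x \<in> S" using allk by metis
    qed
    then have "card {..<n} \<le> card S" by (intro card_mono) (auto simp: S_def)
    moreover have "card S \<le> g" unfolding S_def using card_image_le by fastforce
    ultimately show False using glt by simp
  qed

  have main: "contains_C_up M R n g"
    unfolding contains_C_up_def
  proof (intro exI conjI)
    show "S \<subseteq> {..<n}" using gn by (simp add: S_def)
    show "bij_betw gg {..<g} S" using injg by (simp add: S_def bij_betw_def)
    show "\<forall>i<g. \<forall>j<g. row_on M S (f i) (gg j) = Cmat g i j"
      using ent by (auto simp: row_on_def S_def)
    show "bij_betw (\<lambda>i. row_on M S (f i)) {..<g} (up_rows M R S)"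
      unfolding bij_betw_def
    proof
      show "inj_on (\<lambda>i. row_on M S (f i)) {..<g}"
      proof (rule inj_onI)
        fix i i' assume i: "i \<in> {..<g}" and i': "i' \<in> {..<g}"
          and e: "row_on M S (f i) = row_on M S (f i')"
        have il: "i < g" and il': "i' < g" using i i' by auto
        have t1: "row_on M S (f i) (gg i)" by (simp add: rowf[OF il])
        have t2: "row_on M S (f i') (gg i)" using t1 e by simp
        have a: "gg i = gg i' \<or> gg i = gg (Suc i' mod g)" using t2 by (simp add: rowf[OF il'])
        have t3: "row_on M S (f i') (gg i')" by (simp add: rowf[OF il'])
        have t4: "row_on M S (f i) (gg i')" using t3 e by simp
        have b: "gg i' = gg i \<or> gg i' = gg (Suc i mod g)" using t4 by (simp add: rowf[OF il])
        show "i = i'"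
        proof (rule ccontr)
          assume ne: "i \<noteq> i'"
          have n1: "gg i \<noteq> gg i'" using ggeq[OF il il'] ne by simp
          then have "gg i = gg (Suc i' mod g)" using a by blast
          then have c1: "i = Suc i' mod g" using ggeq[OF il suclt] by blast
          have "gg i' = gg (Suc i mod g)" using b n1 by auto
          then have c2: "i' = Suc i mod g" using ggeq[OF il' suclt] by blast
          show False using two_step_False[OF il il' g3 c1 c2] .
        qed
      qed
      show "(\<lambda>i. row_on M S (f i)) ` {..<g} = up_rows M R S"
      proof
        show "(\<lambda>i. row_on M S (f i)) ` {..<g} \<subseteq> up_rows M R S"
        proof
          fix x assume "x \<in> (\<lambda>i. row_on M S (f i)) ` {..<g}"
          then obtain i where i: "i < g" "x = row_on M S (f i)" by auto
          have nd: "\<not> (\<exists>r'\<in>R. row_on M S r' \<noteq> row_on M S (f i) \<and> row_on M S (f i) \<le> row_on M S r')"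
          proof
            assume "\<exists>r'\<in>R. row_on M S r' \<noteq> row_on M S (f i) \<and> row_on M S (f i) \<le> row_on M S r'"
            then obtain r' where r': "r' \<in> R" "row_on M S r' \<noteq> row_on M S (f i)"
              "row_on M S (f i) \<le> row_on M S r'" by blast
            have "row_on M S (f i) (gg i)" using rowf i by simp
            then have c1: "M r' (gg i)" using r'(3) by (auto simp: le_fun_def row_on_def)
            have "row_on M S (f i) (gg (Suc i mod g))" using rowf i by simp
            then have c2: "M r' (gg (Suc i mod g))" using r'(3) by (auto simp: le_fun_def row_on_def)
            have X: "r' \<noteq> f i" using r' by auto
            have Y: "gg i \<noteq> gg (Suc i mod g)" using ggeq[of i "Suc i mod g", OF i(1) suclt] sucne[OF i(1)] by auto
            have Z: "r' < n + m" using r' RR by auto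
            show False
              by (rule linM[of r' "f i" "gg i" "gg (Suc i mod g)"]) (use X Y Z c1 c2 fnl gnl suclt i ent1 ent2 in auto)
          qed
          have fiR: "f i \<in> R" using fR[OF i(1)] .
          show "x \<in> up_rows M R S" unfolding up_rows_def mem_Collect_eq
            by (rule exI[of _ "f i"]) (use i(2) fiR nd in simp)
        qed
        show "up_rows M R S \<subseteq> (\<lambda>i. row_on M S (f i)) ` {..<g}"
        proof
          fix x assume "x \<in> up_rows M R S"
          then obtain r where r: "x = row_on M S r" "r \<in> R"
            and nd: "\<not> (\<exists>r'\<in>R. row_on M S r' \<noteq> row_on M S r \<and> row_on M S r \<le> row_on M S r')"
            unfolding up_rows_def by blast
          show "x \<in> (\<lambda>i. row_on M S (f i)) ` {..<g}"
          proof (cases "r \<in> f ` {..<g}")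
            case True then show ?thesis using r by auto
          next
            case False
            then have rn: "r < n" using Rlow r by simp
            have rnm: "r < n + m" using rn by simp
            show ?thesis
            proof (cases "\<exists>p<g. M r (gg p)")
              case False
              have z: "row_on M S r = (\<lambda>_. False)" by (rule ext) (use False in \<open>auto simp: row_on_def S_def\<close>)
              have g0: "0 < g" using g3 by simp
              have "row_on M S (f 0) (gg 0)" using rowf[OF g0] by simp
              then have ne: "row_on M S (f 0) \<noteq> row_on M S r" using z by auto
              have le: "row_on M S r \<le> row_on M S (f 0)" using z by (simp add: le_fun_def)
              have "f 0 \<in> R" using fR[OF g0] .
              then have False using nd ne le by blast
              then show ?thesis ..
            next
              case True
              then obtain p where p: "p < g" "M r (gg p)" by blast
              show ?thesis
              proof (cases "\<forall>j<g. M r (gg j) \<longrightarrow> j = p")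
                case True
                have le: "row_on M S r \<le> row_on M S (f p)"
                proof (rule le_funI)
                  fix x
                  show "row_on M S r x \<le> row_on M S (f p) x"
                  proof (rule le_boolI)
                    assume "row_on M S r x"
                    then obtain j where j: "j < g" "x = gg j" "M r (gg j)"
                      unfolding row_on_def S_def by blast
                    then have "j = p" using True by blast
                    then show "row_on M S (f p) x" using j rowf[OF p(1)] by simp
                  qed
                qed
                have A1: "row_on M S (f p) (gg (Suc p mod g))" using rowf[OF p(1)] by simp
                have A2: "\<not> row_on M S r (gg (Suc p mod g))"
                proof
                  assume "row_on M S r (gg (Suc p mod g))"
                  then have "M r (gg (Suc p mod g))" unfolding row_on_def by blast
                  then have "Suc p mod g = p" using True suclt by blast
                  then show False using sucne[OF p(1)] by blast
                qed
                have ne: "row_on M S (f p) \<noteq> row_on M S r"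
                proof
                  assume "row_on M S (f p) = row_on M S r"
                  then show False using A1 A2 by metis
                qed
                have fpR: "f p \<in> R" using fR[OF p(1)] .
                have False using nd le ne fpR by blast
                then show ?thesis ..
              next
                case False
                then obtain q where q: "q < g" "M r (gg q)" "q \<noteq> p" by blast
                have only: "\<forall>j<g. M r (gg j) \<longrightarrow> j = p \<or> j = q"
                proof (intro allI impI)
                  fix j assume j: "j < g" "M r (gg j)"
                  have "gg j = r \<or> gg j = Suc r mod n" using j Mlow rn by simp
                  moreover have "gg p = r \<or> gg p = Suc r mod n" using p Mlow rn by simp
                  moreover have "gg q = r \<or> gg q = Suc r mod n" using q Mlow rn by simp
                  moreover have "gg p \<noteq> gg q" using ggeq p q by auto
                  ultimately have "gg j = gg p \<or> gg j = gg q" by auto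
                  then show "j = p \<or> j = q" using ggeq j p q by auto
                qed
                have "False" using nochord[OF rnm \<open>r \<notin> f ` {..<g}\<close> p(1) q(1) q(3)[symmetric] p(2) q(2) only] .
                then show ?thesis ..
              qed
            qed
          qed
        qed
      qed
    qed
  qed
  have "H \<subseteq> {..<m}" by (auto simp: H_def)
  then show ?thesis using Hne main unfolding M_def R_def by blast
qed

end
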